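(* Let $n \ge 2$ and let $f : \mathbb{R}^n \to \mathbb{R}$ be a function in $\mathcal{N}^*_n$. Then every level set $f^{-1}(y)$, $y \in \mathbb{R}$, is homeomorphic to an open (possibly empty) subset of $\mathbb{R}^{n-1}$. Consequently, $f$ has unbounded level components, i.e. for every $y\in\mathbb{R}$ every path component of $f^{-1}(y)$ is unbounded.
   Context: $\mathcal{N}^*_n$ (non-singular functions) is the set of functions $\mathbb{R}^n\to\mathbb{R}$ of the form $\nu_\kappa\circ\ell_\kappa\circ\cdots\circ\nu_0\circ\ell_0$ computed by a layered feed-forward network with input dimension $n$, output dimension 1, and all hidden layers of width exactly $n$, where: the activation $\psi:\mathbb{R}\to\mathbb{R}$ is some continuous one-to-one function, each $\nu_i$ applies $\psi$ coordinatewise, each $\ell_i$ ($i<\kappa$) is an affine map $\mathbb{R}^n\to\mathbb{R}^n$ with nonsingular weight matrix, and $\ell_\kappa:\mathbb{R}^n\to\mathbb{R}$ is an affine map with nonzero weight vector. *)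

theory Defs
  imports "HOL-Analysis.Analysis"
begin

definition coordwise :: "(real \<Rightarrow> real) \<Rightarrow> real^'n \<Rightarrow> real^'n" where
  "coordwise \<psi> x = (\<chi> i. \<psi> (x $ i))"

fun hidden_net :: "(real \<Rightarrow> real) \<Rightarrow> ((real^'n^'n) \<times> (real^'n)) list \<Rightarrow> real^'n \<Rightarrow> real^'n" where
  "hidden_net \<psi> [] x = x"
| "hidden_net \<psi> ((A, b) # Ls) x = hidden_net \<psi> Ls (coordwise \<psi> (A *v x + b))"

definition nonsingular_net :: "(real^'n \<Rightarrow> real) \<Rightarrow> bool" where
  "nonsingular_net f \<longleftrightarrow>
     (\<exists>\<psi> Ls w c. continuous_on UNIV \<psi> \<and> inj \<psi> \<and>
        (\<forall>(A, b) \<in> set Ls. invertible A) \<and> w \<noteq> 0 \<and>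
        f = (\<lambda>x. \<psi> (w \<bullet> hidden_net \<psi> Ls x + c)))"

end

theory Submission
  imports Defs
begin

lemma hn_cont: "continuous_on UNIV \<psi> \<Longrightarrow> continuous_on UNIV (hidden_net \<psi> Ls)"
proof (induction Ls)
  case Nil then show ?case by (simp add: continuous_on_id')
next
  case (Cons L Ls)
  obtain A b where L: "L = (A, b)" by fastforce
  have c1: "continuous_on UNIV (\<lambda>x::real^'a. coordwise \<psi> (A *v x + b))"
    unfolding coordwise_def
    by (intro continuous_intros continuous_on_compose2[OF Cons.prems]) auto
  show ?case unfolding L hidden_net.simps
    using continuous_on_compose2[OF Cons.IH[OF Cons.prems] c1] by auto
qed

lemma hn_inj: "inj \<psi> \<Longrightarrow> \<forall>(A, b) \<in> set Ls. invertible A \<Longrightarrow> inj (hidden_net \<psi> Ls)"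
proof (induction Ls)
  case Nil then show ?case by simp
next
  case (Cons L Ls)
  obtain A b where L: "L = (A, b)" by fastforce
  have "invertible A" using Cons.prems L by auto
  then obtain A' where A': "A' ** A = mat 1" unfolding invertible_def by blast
  have i1: "inj (\<lambda>x::real^'a. coordwise \<psi> (A *v x + b))"
  proof
    fix x y :: "real^'a"
    assume "coordwise \<psi> (A *v x + b) = coordwise \<psi> (A *v y + b)"
    then have "\<forall>i. \<psi> ((A *v x + b) $ i) = \<psi> ((A *v y + b) $ i)"
      unfolding coordwise_def by (metis vec_lambda_beta)
    then have "A *v x + b = A *v y + b" using Cons.prems(1) by (simp add: inj_eq vec_eq_iff)
    then have "A' *v (A *v x) = A' *v (A *v y)" by simp
    then show "x = y" by (simp add: matrix_vector_mul_assoc A')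
  qed
  have "inj (hidden_net \<psi> Ls)" using Cons by auto
  then show ?case unfolding L hidden_net.simps using i1 inj_compose[of "hidden_net \<psi> Ls"]
    by (simp add: comp_def)
qed


lemma unb:
  fixes L :: "'a::euclidean_space set" and U :: "'m::euclidean_space set"
  assumes "closed L" "open U" "homeomorphism U L k kinv" "x \<in> L"
  shows "\<not> bounded (path_component_set L x)"
proof
  assume bC: "bounded (path_component_set L x)"
  define C where "C = path_component_set L x"
  define C' where "C' = path_component_set U (kinv x)"
  have hom: "continuous_on U k" "k ` U = L" "continuous_on L kinv" "kinv ` L = U"
     "\<And>u. u \<in> U \<Longrightarrow> kinv (k u) = u" "\<And>v. v \<in> L \<Longrightarrow> k (kinv v) = v"
    using assms(3) unfolding homeomorphism_def by auto
  have x': "kinv x \<in> U" using hom assms(4) by auto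
  have C'U: "C' \<subseteq> U" unfolding C'_def by (rule path_component_subset)
  have CL: "C \<subseteq> L" unfolding C_def by (rule path_component_subset)
  have "k ` C' \<subseteq> C" unfolding C_def
  proof (rule path_component_maximal)
    have "kinv x \<in> C'" unfolding C'_def using x' by (simp add: path_component_refl)
    then show "x \<in> k ` C'" using hom(6)[OF assms(4)] by (metis image_eqI)
    show "path_connected (k ` C')"
      by (rule path_connected_continuous_image[OF continuous_on_subset[OF hom(1) C'U]])
        (simp add: C'_def path_connected_path_component)
    show "k ` C' \<subseteq> L" using C'U hom(2) by auto
  qed
  moreover have "kinv ` C \<subseteq> C'" unfolding C'_def
  proof (rule path_component_maximal)
    have "x \<in> C" unfolding C_def using assms(4) by (simp add: path_component_refl)
    then show "kinv x \<in> kinv ` C" by (metis image_eqI)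
    show "path_connected (kinv ` C)"
      by (rule path_connected_continuous_image[OF continuous_on_subset[OF hom(3) CL]])
        (simp add: C_def path_connected_path_component)
    show "kinv ` C \<subseteq> U" using CL hom(4) by auto
  qed
  moreover have "C' \<subseteq> kinv ` C"
  proof
    fix u assume u: "u \<in> C'"
    then have "k u \<in> C" using \<open>k ` C' \<subseteq> C\<close> by blast
    moreover have "u = kinv (k u)" using hom(5) u C'U by auto
    ultimately show "u \<in> kinv ` C" by blast
  qed
  ultimately have CC: "C' = kinv ` C" by blast
  have "closedin (top_of_set U) C'" unfolding C'_def
    by (rule closedin_path_component_locally_path_connected[OF open_imp_locally_path_connected[OF assms(2)]])
  then obtain F where F: "closed F" "C' = U \<inter> F" by (auto simp: closedin_closed)
  have "C = L \<inter> kinv -` F"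
  proof
    show "C \<subseteq> L \<inter> kinv -` F" using CC F CL by blast
    show "L \<inter> kinv -` F \<subseteq> C"
    proof
      fix z assume z: "z \<in> L \<inter> kinv -` F"
      then have "kinv z \<in> C'" using F hom(4) by blast
      then obtain z' where z': "z' \<in> C" "kinv z = kinv z'" using CC by blast
      have "z = k (kinv z)" using hom(6) z by auto
      also have "\<dots> = z'" using z' hom(6) CL by auto
      finally show "z \<in> C" using z' by simp
    qed
  qed
  moreover have "closedin (top_of_set L) (L \<inter> kinv -` F)"
    by (rule continuous_closedin_preimage[OF hom(3) F(1)])
  ultimately have "closed C" using closedin_closed_trans assms(1) by metis
  then have "compact C" using bC C_def compact_eq_bounded_closed by blast
  then have cC': "compact C'" using CC compact_continuous_image continuous_on_subset[OF hom(3) CL] by metis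
  have "open C'" unfolding C'_def by (rule open_path_component[OF assms(2)])
  moreover have "closed C'" using cC' compact_imp_closed by blast
  moreover have "C' \<noteq> {}" unfolding C'_def using x' path_component_refl by blast
  ultimately have "C' = UNIV" using clopen by blast
  then show False using cC' compact_imp_bounded not_bounded_UNIV by metis
qed


lemma level:
  fixes H :: "real^'n \<Rightarrow> real^'n" and w :: "real^'n" and \<psi> :: "real \<Rightarrow> real"
  assumes cH: "continuous_on UNIV H" and iH: "inj H" and ipsi: "inj \<psi>" and w: "w \<noteq> 0"
    and dm: "DIM('m::euclidean_space) = CARD('n) - 1"
  shows "\<exists>U::'m set. open U \<and> (\<exists>k kinv. homeomorphism U ((\<lambda>x. \<psi> (w \<bullet> H x + c)) -` {y}) k kinv)"
proof (cases "\<exists>t. \<psi> t = y")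
  case False
  then have "(\<lambda>x. \<psi> (w \<bullet> H x + c)) -` {y} = {}" by auto
  then show ?thesis by (intro exI[of _ "{}"]) (auto simp: homeomorphism_def)
next
  case True
  then obtain t where t: "\<psi> t = y" by blast
  define L where "L = (\<lambda>x. \<psi> (w \<bullet> H x + c)) -` {y}"
  have Leq: "L = {x. w \<bullet> H x = t - c}"
    unfolding L_def using t ipsi by (auto simp: inj_eq)
  obtain Hinv where hom: "homeomorphism UNIV (range H) H Hinv"
    using invariance_of_domain_homeomorphism[OF open_UNIV cH _ iH] by auto
  have oV: "open (range H)" using invariance_of_domain[OF cH open_UNIV iH] .
  define S where "S = range H \<inter> {v. w \<bullet> v = t - c}"
  have homL: "homeomorphism L S H Hinv"
    by (rule homeomorphism_of_subsets[OF hom]) (auto simp: Leq S_def)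
  have dd: "dim (UNIV :: 'm set) = dim {v::real^'n. w \<bullet> v = 0}"
    using dim_hyperplane[OF w] dm by (simp add: dim_UNIV)
  obtain g :: "'m \<Rightarrow> real^'n" and g' where gg: "linear g" "linear g'" "g ` UNIV = {v. w \<bullet> v = 0}"
     "g' ` {v. w \<bullet> v = 0} = UNIV" "\<And>x. g' (g x) = x" "\<And>v. w \<bullet> v = 0 \<Longrightarrow> g (g' v) = v"
  proof (rule isometries_subspaces[OF subspace_UNIV subspace_hyperplane dd])
    fix f :: "'m \<Rightarrow> real^'n" and h
    assume "linear f" "linear h" "f ` UNIV = {v. w \<bullet> v = 0}" "h ` {v. w \<bullet> v = 0} = UNIV"
      "\<And>x. x \<in> UNIV \<Longrightarrow> h (f x) = x" "\<And>x. x \<in> {v. w \<bullet> v = 0} \<Longrightarrow> f (h x) = x"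
    then show thesis using that[of f h] by simp
  qed
  define p0 :: "real^'n" where "p0 = scaleR ((t - c) / (w \<bullet> w)) w"
  have p0: "w \<bullet> p0 = t - c" using w unfolding p0_def by (simp add: inner_scaleR_right)
  define \<phi> where "\<phi> = (\<lambda>u. p0 + g u)"
  define \<phi>i where "\<phi>i = (\<lambda>v. g' (v - p0))"
  have lg: "continuous_on A g" for A
    using gg(1) linear_continuous_on linear_conv_bounded_linear by blast
  have lg': "continuous_on A g'" for A
    using gg(2) linear_continuous_on linear_conv_bounded_linear by blast
  have c\<phi>: "continuous_on A \<phi>" for A unfolding \<phi>_def
    by (intro continuous_on_add continuous_on_const lg)
  have c\<phi>i: "continuous_on A \<phi>i" for A unfolding \<phi>i_def
    by (rule continuous_on_compose2[OF lg' continuous_on_diff[OF continuous_on_id continuous_on_const] subset_UNIV])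
  define U where "U = \<phi> -` range H"
  have oU: "open U" unfolding U_def using open_vimage[OF oV c\<phi>] .
  have wg: "w \<bullet> g u = 0" for u using gg(3) by blast
  have homU: "homeomorphism U S \<phi> \<phi>i"
  proof (rule homeomorphismI)
    show "continuous_on U \<phi>" "continuous_on S \<phi>i" by (rule c\<phi>, rule c\<phi>i)
    show "\<phi> ` U \<subseteq> S" unfolding U_def S_def \<phi>_def using wg p0 by (auto simp: inner_add_right)
    show "\<phi>i ` S \<subseteq> U"
    proof
      fix u assume "u \<in> \<phi>i ` S"
      then obtain v where v: "v \<in> S" "u = \<phi>i v" by blast
      have "w \<bullet> (v - p0) = 0" using v(1) p0 unfolding S_def by (simp add: inner_diff_right)
      then have "\<phi> u = v" unfolding v(2) \<phi>_def \<phi>i_def using gg(6) by simp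
      then show "u \<in> U" using v(1) unfolding U_def S_def by auto
    qed
    show "\<phi>i (\<phi> u) = u" for u unfolding \<phi>_def \<phi>i_def using gg(5) by simp
    show "\<phi> (\<phi>i v) = v" if "v \<in> S" for v
    proof -
      have "w \<bullet> (v - p0) = 0" using that p0 unfolding S_def by (simp add: inner_diff_right)
      then show ?thesis unfolding \<phi>_def \<phi>i_def using gg(6) by simp
    qed
  qed
  have "homeomorphism U L (Hinv \<circ> \<phi>) (\<phi>i \<circ> H)"
    by (rule homeomorphism_compose[OF homU homeomorphism_symD[OF homL]])
  then show ?thesis using oU unfolding L_def by blast
qed


theorem lemma3:
  fixes f :: "real^'n \<Rightarrow> real"
  assumes "CARD('n) \<ge> 2"
    and "DIM('m::euclidean_space) = CARD('n) - 1"
    and "nonsingular_net f"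
  shows "(\<forall>y. \<exists>U :: 'm set. open U \<and> (f -` {y}) homeomorphic U) \<and>
         (\<forall>y. \<forall>x \<in> f -` {y}. \<not> bounded (path_component_set (f -` {y}) x))"
proof -
  obtain \<psi> Ls w c where cpsi: "continuous_on UNIV \<psi>" and ipsi: "inj \<psi>"
    and inv: "\<forall>(A, b) \<in> set Ls. invertible A" and w: "w \<noteq> 0"
    and f: "f = (\<lambda>x. \<psi> (w \<bullet> hidden_net \<psi> Ls x + c))"
    using assms(3) unfolding nonsingular_net_def by blast
  have cH: "continuous_on UNIV (hidden_net \<psi> Ls)" using hn_cont[OF cpsi] .
  have iH: "inj (hidden_net \<psi> Ls)" using hn_inj[OF ipsi inv] .
  have ex: "\<exists>U::'m set. open U \<and> (\<exists>k kinv. homeomorphism U (f -` {y}) k kinv)" for y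
    unfolding f using level[OF cH iH ipsi w assms(2)] .
  have cf: "continuous_on UNIV f" unfolding f
    by (rule continuous_on_compose2[OF cpsi _ subset_UNIV])
      (intro continuous_intros cH)
  have clL: "closed (f -` {y})" for y by (rule closed_vimage[OF closed_singleton cf])
  show ?thesis
  proof (intro conjI allI ballI)
    fix y
    obtain U :: "'m set" and k kinv where "open U" "homeomorphism U (f -` {y}) k kinv"
      using ex by blast
    then show "\<exists>U :: 'm set. open U \<and> (f -` {y}) homeomorphic U"
      unfolding homeomorphic_def using homeomorphism_symD by blast
  next
    fix y x assume x: "x \<in> f -` {y}"
    obtain U :: "'m set" and k kinv where "open U" "homeomorphism U (f -` {y}) k kinv"
      using ex by blast
    then show "\<not> bounded (path_component_set (f -` {y}) x)"
      using unb[OF clL \<open>open U\<close> _ x] by blast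
  qed
qed

end
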